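(* Let $n,m,m'\in\mathbb{N}$ with $\gcd(m,m')=1$, and let $\{R_j\}_{j\in J}$ be a system of representatives of the right cosets in $\Gamma_0(mm'n)\backslash\Gamma_0(mn)$. Then $\{B_mR_jB_m^{-1}\}_{j\in J}$ is a system of representatives of the right cosets in $\Gamma_0(m'n)\backslash\Gamma_0(n)$.
   Context: $B_m=\begin{pmatrix}m&0\\0&1\end{pmatrix}$; $\Gamma_0(N)=\{\begin{pmatrix}a&b\\c&d\end{pmatrix}\in SL(2,\mathbb{Z}):N\mid c\}$. A system of representatives $\{R_j\}$ of the right cosets in $H\backslash G$ means $G=\bigsqcup_jHR_j$ (disjoint union). *)

theory Defs
  imports "HOL-Analysis.Analysis"
begin

text \<open>2x2 matrices are represented as real matrices; integrality is a predicate.\<close>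

definition SL2Z :: "(real^2^2) set" where
  "SL2Z = {A. (\<forall>i j. A $ i $ j \<in> \<int>) \<and> det A = 1}"

definition Gamma0 :: "nat \<Rightarrow> (real^2^2) set" where
  "Gamma0 N = {A \<in> SL2Z. \<exists>k::int. A $ 2 $ 1 = of_int (int N * k)}"

definition Bmat :: "nat \<Rightarrow> real^2^2" where
  "Bmat m = (\<chi> i j. if i = j then (if i = 1 then real m else 1) else 0)"

definition right_coset_reps :: "(real^2^2) set \<Rightarrow> (real^2^2) set \<Rightarrow> ('j \<Rightarrow> real^2^2) \<Rightarrow> 'j set \<Rightarrow> bool" where
  "right_coset_reps H G R J \<longleftrightarrow>
     G = (\<Union>j\<in>J. (\<lambda>h. h ** R j) ` H) \<and>
     (\<forall>i\<in>J. \<forall>j\<in>J. i \<noteq> j \<longrightarrow> (\<lambda>h. h ** R i) ` H \<inter> (\<lambda>h. h ** R j) ` H = {})"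

end

theory Submission
  imports Defs "HOL-Computational_Algebra.Primes"
begin


definition M :: "real \<Rightarrow> real \<Rightarrow> real \<Rightarrow> real \<Rightarrow> real^2^2" where
  "M a b c d = (\<chi> i j. if i = 1 then (if j = 1 then a else b) else (if j = 1 then c else d))"

lemma M_entries[simp]: "M a b c d $ 1 $ 1 = a" "M a b c d $ 1 $ 2 = b"
  "M a b c d $ 2 $ 1 = c" "M a b c d $ 2 $ 2 = d"
  by (simp_all add: M_def)

lemma M_eq_iff: "M a b c d = M a' b' c' d' \<longleftrightarrow> a = a' \<and> b = b' \<and> c = c' \<and> d = d'"
  by (metis M_entries)

lemma M_eta: "A = M (A$1$1) (A$1$2) (A$2$1) (A$2$2)"
  by (simp add: vec_eq_iff forall_2)

lemma M_mult: "M a b c d ** M e f g h = M (a*e+b*g) (a*f+b*h) (c*e+d*g) (c*f+d*h)"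
  by (simp add: vec_eq_iff forall_2 matrix_matrix_mult_def sum_2)

lemma M_det: "det (M a b c d) = a*d - b*c"
  by (simp add: det_2)

lemma mat1_M: "mat 1 = M 1 0 0 1"
  by (simp add: vec_eq_iff forall_2 mat_def)

lemma Bmat_M: "Bmat m = M (real m) 0 0 1"
  by (simp add: vec_eq_iff forall_2 Bmat_def)

lemma Bmat_inv: assumes "m > 0" shows "matrix_inv (Bmat m) = M (1/real m) 0 0 1"
proof -
  have ex: "\<exists>A'. Bmat m ** A' = mat 1 \<and> A' ** Bmat m = mat 1"
    by (rule exI[of _ "M (1/real m) 0 0 1"]) (use assms in \<open>simp add: Bmat_M M_mult mat1_M\<close>)
  obtain A' where A': "Bmat m ** A' = mat 1" "A' ** Bmat m = mat 1" and "matrix_inv (Bmat m) = A'"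
    unfolding matrix_inv_def using someI_ex[OF ex] by blast
  have "A' = A' ** (Bmat m ** M (1/real m) 0 0 1)" using assms by (simp add: Bmat_M M_mult mat1_M[symmetric])
  also have "\<dots> = M (1/real m) 0 0 1" by (simp add: matrix_mul_assoc A')
  finally show ?thesis using \<open>matrix_inv (Bmat m) = A'\<close> by simp
qed

lemma Gamma0_iff: "A \<in> Gamma0 N \<longleftrightarrow> (\<exists>a b c d::int. A = M (of_int a) (of_int b) (of_int (int N * c)) (of_int d) \<and> a*d - b*(int N*c) = 1)"
proof
  assume "A \<in> Gamma0 N"
  then obtain k where A: "\<forall>i j. A $ i $ j \<in> \<int>" "det A = 1" "A $ 2 $ 1 = of_int (int N * k)"
    unfolding Gamma0_def SL2Z_def by auto
  have i: "A$1$1 \<in> \<int>" "A$1$2 \<in> \<int>" "A$2$2 \<in> \<int>" using A(1) by blast+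
  obtain a where a: "A$1$1 = of_int a" using i(1) by (rule Ints_cases)
  obtain b where b: "A$1$2 = of_int b" using i(2) by (rule Ints_cases)
  obtain d where d: "A$2$2 = of_int d" using i(3) by (rule Ints_cases)
  have e: "A = M (of_int a) (of_int b) (of_int (int N * k)) (of_int d)"
    using M_eta[of A] a b d A(3) by simp
  have "det A = real_of_int (a*d - b*(int N*k))" by (subst e, simp add: M_det)
  then have "real_of_int (a*d - b*(int N*k)) = real_of_int 1" using A(2) by simp
  then have "a*d - b*(int N*k) = 1" using of_int_eq_iff by blast
  with e show "\<exists>a b c d::int. A = M (of_int a) (of_int b) (of_int (int N * c)) (of_int d) \<and> a*d - b*(int N*c) = 1" by blast
next
  assume "\<exists>a b c d::int. A = M (of_int a) (of_int b) (of_int (int N * c)) (of_int d) \<and> a*d - b*(int N*c) = 1"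
  then obtain a b c d where A: "A = M (of_int a) (of_int b) (of_int (int N * c)) (of_int d)" "a*d - b*(int N*c) = 1" by blast
  have "real_of_int (a*d - b*(int N*c)) = 1" using A(2) by simp
  then have "det A = 1" unfolding A(1) M_det by simp
  moreover have "\<forall>i j. A $ i $ j \<in> \<int>" unfolding A(1) by (auto simp: forall_2)
  ultimately show "A \<in> Gamma0 N" unfolding Gamma0_def SL2Z_def using A(1) by auto
qed


lemma exists_coprime_shift:
  fixes d e M :: int
  assumes M: "M \<noteq> 0" and P: "\<And>p. prime p \<Longrightarrow> p dvd M \<Longrightarrow> p dvd d \<Longrightarrow> p dvd e \<Longrightarrow> False"
  shows "\<exists>t. coprime (d + t*e) M"
proof -
  define S where "S = {p::int. prime p \<and> p dvd M \<and> \<not> p dvd d}"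
  have fin: "finite S"
  proof (rule finite_subset[of _ "{-\<bar>M\<bar>..\<bar>M\<bar>}"])
    show "S \<subseteq> {-\<bar>M\<bar>..\<bar>M\<bar>}"
    proof
      fix p assume "p \<in> S"
      then have "p dvd M" "p > 0" unfolding S_def using prime_gt_0_int by auto
      then have "p dvd \<bar>M\<bar>" by simp
      moreover have "\<bar>M\<bar> \<noteq> 0" using M by simp
      ultimately have "p \<le> \<bar>M\<bar>" using dvd_imp_le_int[of "\<bar>M\<bar>" p] by linarith
      then show "p \<in> {-\<bar>M\<bar>..\<bar>M\<bar>}" using \<open>p > 0\<close> by auto
    qed
  qed (rule finite_atLeastAtMost_int)
  define t where "t = \<Prod>S"
  have "coprime (d + t*e) M"
  proof (rule ccontr)
    assume nc: "\<not> coprime (d + t*e) M"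
    have "gcd (d + t*e) M \<noteq> 0" using M by simp
    moreover have "\<not> is_unit (gcd (d + t*e) M)" using nc by (simp add: coprime_iff_gcd_eq_1 is_unit_gcd)
    ultimately obtain q where q: "q dvd gcd (d + t*e) M" "prime q" using prime_divisor_exists by blast
    then have qM: "q dvd M" and qs: "q dvd d + t*e" by auto
    show False
    proof (cases "q dvd d")
      case True
      then have "\<not> q dvd e" using P q(2) qM by blast
      moreover have "\<not> q dvd t"
      proof
        assume "q dvd t"
        then obtain x where "x \<in> S" "q dvd x" using prime_dvd_prod_iff[OF fin q(2), of id] unfolding t_def by auto
        then have "q = x" using primes_dvd_imp_eq q(2) S_def by blast
        then show False using \<open>x \<in> S\<close> True S_def by blast
      qed
      ultimately have "\<not> q dvd t*e" using prime_dvd_mult_iff q(2) by blast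
      moreover have "q dvd t*e" using qs True by (simp add: dvd_add_right_iff)
      ultimately show False by blast
    next
      case False
      then have "q \<in> S" using q(2) qM S_def by blast
      then have "q dvd t" unfolding t_def using dvd_prodI[OF fin \<open>q \<in> S\<close>, of "\<lambda>x. x"] by simp
      then have "q dvd t*e" by simp
      then have "q dvd d" using qs by (simp add: dvd_add_left_iff)
      then show False using False by blast
    qed
  qed
  then show ?thesis by blast
qed

lemma key_int:
  fixes a b c d :: int and n m m' :: nat
  assumes "m > 0" "coprime m m'" "a*d - b*(int n*c) = 1"
  shows "\<exists>s t k. (1 + s*(int m'*int n*t))*b + s*d = int m * k"
proof -
  have "\<exists>t. coprime (d + t*(int m'*int n*b)) (int m)"
  proof (rule exists_coprime_shift)
    show "int m \<noteq> 0" using assms by simp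
    fix p :: int assume p: "prime p" "p dvd int m" "p dvd d" "p dvd int m' * int n * b"
    have cp: "coprime (int m) (int m')" using assms(2) by simp
    have "\<not> p dvd int m'"
    proof
      assume "p dvd int m'"
      then have "is_unit p" using coprime_common_divisor[OF cp p(2)] by blast
      then show False using p(1) by auto
    qed
    then have "p dvd int n * b" using p(1,4) prime_dvd_mult_iff by (metis mult.assoc)
    then have "p dvd b * (int n * c)" by (metis dvd_mult dvd_mult2 mult.commute prime_dvd_mult_iff p(1))
    moreover have "p dvd a*d" using p(3) by simp
    ultimately have "p dvd 1" using assms(3) by (metis dvd_diff)
    then show False using p(1) by auto
  qed
  then obtain t where t: "coprime (d + t*(int m'*int n*b)) (int m)" by blast
  obtain u v where uv: "u * (d + t*(int m'*int n*b)) + v * int m = 1"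
    using bezout_int[of "d + t*(int m'*int n*b)" "int m"] t by (auto simp: coprime_iff_gcd_eq_1)
  have e1: "(1 + (-b*u)*(int m'*int n*t))*b + (-b*u)*d = b - b*(u * (d + t*(int m'*int n*b)))"
    by (simp add: algebra_simps)
  have e2: "u * (d + t*(int m'*int n*b)) = 1 - v * int m" using uv by linarith
  have "(1 + (-b*u)*(int m'*int n*t))*b + (-b*u)*d = int m * (b * v)"
    unfolding e1 e2 by (simp add: algebra_simps)
  then show ?thesis by blast
qed


lemma Gamma0_I: "det A = 1 \<Longrightarrow> A = M (of_int a) (of_int b) (of_int (int N * c)) (of_int d) \<Longrightarrow> A \<in> Gamma0 N"
  unfolding Gamma0_def SL2Z_def by (auto simp: forall_2)

lemma Gamma0_det: "A \<in> Gamma0 N \<Longrightarrow> det A = 1"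
  unfolding Gamma0_def SL2Z_def by auto

lemma Gamma0_mult: assumes "A \<in> Gamma0 N" "B \<in> Gamma0 N" shows "A ** B \<in> Gamma0 N"
proof -
  obtain a b c d where A: "A = M (of_int a) (of_int b) (of_int (int N * c)) (of_int d)"
    using assms(1) Gamma0_iff by blast
  obtain a' b' c' d' where B: "B = M (of_int a') (of_int b') (of_int (int N * c')) (of_int d')"
    using assms(2) Gamma0_iff by blast
  show ?thesis
  proof (rule Gamma0_I[where a="a*a'+b*(int N*c')" and b="a*b'+b*d'" and c="c*a'+d*c'" and d="int N*c*b'+d*d'"])
    show "det (A ** B) = 1" using assms by (simp add: det_mul Gamma0_det)
    show "A ** B = M (of_int (a*a'+b*(int N*c'))) (of_int (a*b'+b*d')) (of_int (int N * (c*a'+d*c'))) (of_int (int N*c*b'+d*d'))"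
      unfolding A B M_mult M_eq_iff by (simp add: algebra_simps)
  qed
qed

lemma Gamma0_one: "mat 1 \<in> Gamma0 N"
  by (rule Gamma0_I[where a=1 and b=0 and c=0 and d=1]) (simp_all add: mat1_M M_det)

lemma Gamma0_dvd: assumes "N dvd K" "A \<in> Gamma0 K" shows "A \<in> Gamma0 N"
proof -
  obtain a b c d where A: "A = M (of_int a) (of_int b) (of_int (int K * c)) (of_int d)"
    using assms(2) Gamma0_iff by blast
  obtain r where "K = N * r" using assms(1) by blast
  show ?thesis
    by (rule Gamma0_I[where a=a and b=b and c="int r*c" and d=d])
      (use assms(2) A \<open>K = N * r\<close> in \<open>simp_all add: Gamma0_det mult.assoc\<close>)
qed

definition adj :: "real^2^2 \<Rightarrow> real^2^2" where
  "adj A = M (A$2$2) (-A$1$2) (-A$2$1) (A$1$1)"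

lemma adj_M: "adj (M a b c d) = M d (-b) (-c) a"
  unfolding adj_def by simp

lemma adj_inv: assumes "det A = 1" shows "adj A ** A = mat 1" "A ** adj A = mat 1"
proof -
  obtain a b c d where A: "A = M a b c d" using M_eta by blast
  have e: "a*d - b*c = 1" using assms unfolding A M_det .
  have e2: "d*a - b*c = 1" using e by (simp add: mult.commute)
  show "adj A ** A = mat 1" unfolding A adj_M M_mult mat1_M M_eq_iff using e e2
    by (simp add: algebra_simps)
  show "A ** adj A = mat 1" unfolding A adj_M M_mult mat1_M M_eq_iff using e e2
    by (simp add: algebra_simps)
qed


lemma adj_Gamma0: assumes "A \<in> Gamma0 N" shows "adj A \<in> Gamma0 N"
proof -
  obtain a b c d where A: "A = M (of_int a) (of_int b) (of_int (int N * c)) (of_int d)" "a*d - b*(int N*c) = 1"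
    using assms Gamma0_iff by blast
  show ?thesis unfolding Gamma0_iff
    by (rule exI[of _ d], rule exI[of _ "-b"], rule exI[of _ "-c"], rule exI[of _ a])
       (use A in \<open>simp add: adj_def algebra_simps\<close>)
qed

lemma conj_M: assumes "m > 0"
  shows "M (real m) 0 0 1 ** X ** M (1/real m) 0 0 1 = M (X$1$1) (real m * X$1$2) (X$2$1 / real m) (X$2$2)"
  apply (subst M_eta[of X])
  using assms by (simp add: M_mult)

lemma unconj_M: assumes "m > 0"
  shows "M (1/real m) 0 0 1 ** X ** M (real m) 0 0 1 = M (X$1$1) (X$1$2 / real m) (X$2$1 * real m) (X$2$2)"
  apply (subst M_eta[of X])
  using assms by (simp add: M_mult)

lemma conj_Gamma0: assumes "m > 0" "X \<in> Gamma0 (m*N)"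
  shows "M (real m) 0 0 1 ** X ** M (1/real m) 0 0 1 \<in> Gamma0 N"
proof -
  obtain a b c d where A: "X = M (of_int a) (of_int b) (of_int (int (m*N) * c)) (of_int d)" "a*d - b*(int (m*N)*c) = 1"
    using assms Gamma0_iff by blast
  show ?thesis unfolding Gamma0_iff conj_M[OF assms(1)]
    by (rule exI[of _ a], rule exI[of _ "int m * b"], rule exI[of _ c], rule exI[of _ d])
       (use A assms(1) in \<open>simp add: algebra_simps\<close>)
qed

lemma unconj_Gamma0: assumes "m > 0" "Y \<in> Gamma0 N" "Y$1$2 = of_int (int m * k)"
  shows "M (1/real m) 0 0 1 ** Y ** M (real m) 0 0 1 \<in> Gamma0 (m*N)"
proof -
  obtain a b c d where A: "Y = M (of_int a) (of_int b) (of_int (int N * c)) (of_int d)" "a*d - b*(int N*c) = 1"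
    using assms Gamma0_iff by blast
  have "real_of_int b = real_of_int (int m * k)" using A(1) assms(3) by simp
  then have b: "b = int m * k" using of_int_eq_iff by blast
  show ?thesis unfolding Gamma0_iff unconj_M[OF assms(1)]
    by (rule exI[of _ a], rule exI[of _ k], rule exI[of _ c], rule exI[of _ d])
       (use A assms(1) b in \<open>simp add: algebra_simps\<close>)
qed

lemma conj_back: assumes "m > 0" "X \<in> Gamma0 (m*N)" "M (real m) 0 0 1 ** X ** M (1/real m) 0 0 1 \<in> Gamma0 (m'*N)"
  shows "X \<in> Gamma0 (m*m'*N)"
proof -
  obtain a b c d where A: "X = M (of_int a) (of_int b) (of_int (int (m*N) * c)) (of_int d)" "a*d - b*(int (m*N)*c) = 1"
    using assms Gamma0_iff by blast
  obtain a' b' c' d' where A': "M (real m) 0 0 1 ** X ** M (1/real m) 0 0 1 = M (of_int a') (of_int b') (of_int (int (m'*N) * c')) (of_int d')"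
    using assms(3) Gamma0_iff by blast
  have "real_of_int (int (m*N) * c) / real m = of_int (int (m'*N) * c')"
    using A' unfolding conj_M[OF assms(1)] M_eq_iff using A(1) by simp
  then have "real_of_int (int N * c) = of_int (int (m'*N) * c')" using assms(1) by simp
  then have "int N * c = int (m'*N) * c'" using of_int_eq_iff by blast
  then have "int m * (int N * c) = int m * (int (m'*N) * c')" by simp
  then have "int (m*N) * c = int (m*m'*N) * c'" by (simp add: algebra_simps)
  then show ?thesis unfolding Gamma0_iff using A by metis
qed


lemma key_mat: assumes "m > 0" "coprime m m'" "x \<in> Gamma0 n"
  shows "\<exists>h\<in>Gamma0 (m'*n). \<exists>k. (h ** x)$1$2 = of_int (int m * k)"
proof -
  obtain a b c d where A: "x = M (of_int a) (of_int b) (of_int (int n * c)) (of_int d)" "a*d - b*(int n*c) = 1"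
    using assms Gamma0_iff by blast
  obtain s t k where stk: "(1 + s*(int m'*int n*t))*b + s*d = int m * k"
    using key_int[OF assms(1,2) A(2)] by blast
  define h where "h = M (of_int (1 + s*(int m'*int n*t))) (of_int s) (of_int (int (m'*n) * t)) (of_int 1)"
  have "h \<in> Gamma0 (m'*n)" unfolding Gamma0_iff h_def
    by (rule exI[of _ "1 + s*(int m'*int n*t)"], rule exI[of _ s], rule exI[of _ t], rule exI[of _ 1])
       (simp add: algebra_simps)
  moreover have "(h ** x)$1$2 = of_int (int m * k)"
  proof -
    have "(h ** x)$1$2 = of_int ((1 + s*(int m'*int n*t))*b + s*d)"
      unfolding h_def A(1) M_mult by simp
    then show ?thesis using stk by simp
  qed
  ultimately show ?thesis by blast
qed

theorem mainTheorem11: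
  fixes n m m' :: nat and R :: "'j \<Rightarrow> real^2^2" and J :: "'j set"
  assumes "n > 0" and "m > 0" and "m' > 0"
    and "coprime m m'"
    and "right_coset_reps (Gamma0 (m * m' * n)) (Gamma0 (m * n)) R J"
  shows "right_coset_reps (Gamma0 (m' * n)) (Gamma0 n)
           (\<lambda>j. Bmat m ** R j ** matrix_inv (Bmat m)) J"
proof -
  define B where "B = M (real m) 0 0 1"
  define Bi where "Bi = M (1/real m) 0 0 1"
  define C where "C X = B ** X ** Bi" for X
  have Bm: "Bmat m = B" "matrix_inv (Bmat m) = Bi" unfolding B_def Bi_def
    using Bmat_M Bmat_inv assms(2) by auto
  have BBi: "B ** Bi = mat 1" "Bi ** B = mat 1" unfolding B_def Bi_def mat1_M M_mult using assms(2) by simp_all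
  have Cmult: "C (X ** Y) = C X ** C Y" for X Y
  proof -
    have "C X ** C Y = B ** X ** (Bi ** B) ** Y ** Bi" unfolding C_def by (simp add: matrix_mul_assoc)
    also have "\<dots> = C (X ** Y)" unfolding BBi C_def by (simp add: matrix_mul_assoc)
    finally show ?thesis by simp
  qed
  have C1: "C (mat 1) = mat 1" unfolding C_def using BBi by simp
  have CG: "X \<in> Gamma0 (m*N) \<Longrightarrow> C X \<in> Gamma0 N" for X N
    unfolding C_def B_def Bi_def by (rule conj_Gamma0[OF assms(2)])
  have G: "Gamma0 (m*n) = (\<Union>j\<in>J. (\<lambda>h. h ** R j) ` Gamma0 (m * m' * n))"
   and D: "\<And>i j. i\<in>J \<Longrightarrow> j\<in>J \<Longrightarrow> i \<noteq> j \<Longrightarrow> (\<lambda>h. h ** R i) ` Gamma0 (m * m' * n) \<inter> (\<lambda>h. h ** R j) ` Gamma0 (m * m' * n) = {}"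
    using assms(5) unfolding right_coset_reps_def by auto
  have RG: "R j \<in> Gamma0 (m*n)" if "j \<in> J" for j
  proof -
    have "mat 1 ** R j \<in> (\<lambda>h. h ** R j) ` Gamma0 (m * m' * n)" using Gamma0_one by blast
    then have "R j \<in> (\<Union>j\<in>J. (\<lambda>h. h ** R j) ` Gamma0 (m * m' * n))" using that by (intro UN_I) simp_all
    then show ?thesis using G by simp
  qed
  have CR: "C (R j) \<in> Gamma0 n" if "j \<in> J" for j using CG[OF RG[OF that]] .
  have HG: "Gamma0 (m'*n) \<subseteq> Gamma0 n" using Gamma0_dvd[of n "m'*n"] by (simp add: subset_iff)
  have cover: "Gamma0 n = (\<Union>j\<in>J. (\<lambda>h. h ** C (R j)) ` Gamma0 (m' * n))"
  proof
    show "(\<Union>j\<in>J. (\<lambda>h. h ** C (R j)) ` Gamma0 (m' * n)) \<subseteq> Gamma0 n"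
    proof
      fix x assume "x \<in> (\<Union>j\<in>J. (\<lambda>h. h ** C (R j)) ` Gamma0 (m' * n))"
      then obtain j h where jh: "j \<in> J" "h \<in> Gamma0 (m' * n)" "x = h ** C (R j)" by blast
      have "h \<in> Gamma0 n" using jh(2) HG by (rule subsetD[rotated])
      then show "x \<in> Gamma0 n" unfolding jh(3) using CR[OF jh(1)] by (rule Gamma0_mult)
    qed
    show "Gamma0 n \<subseteq> (\<Union>j\<in>J. (\<lambda>h. h ** C (R j)) ` Gamma0 (m' * n))"
    proof
      fix x assume x: "x \<in> Gamma0 n"
      obtain h k where h: "h \<in> Gamma0 (m'*n)" "(h ** x)$1$2 = of_int (int m * k)"
        using key_mat[OF assms(2,4) x] by blast
      have "h \<in> Gamma0 n" using h(1) HG by (rule subsetD[rotated])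
      then have Y: "h ** x \<in> Gamma0 n" using x by (rule Gamma0_mult)
      have X: "Bi ** (h ** x) ** B \<in> Gamma0 (m*n)"
        unfolding B_def Bi_def using unconj_Gamma0[OF assms(2) Y h(2)] .
      then obtain j h' where j: "j \<in> J" "h' \<in> Gamma0 (m*m'*n)" "Bi ** (h ** x) ** B = h' ** R j"
        using G by (auto simp only: UN_iff image_iff)
      have "C (Bi ** (h ** x) ** B) = h ** x"
        unfolding C_def by (simp add: matrix_mul_assoc BBi) (simp add: matrix_mul_assoc[symmetric] BBi)
      then have hx: "h ** x = C h' ** C (R j)" using j(3) Cmult by simp
      have "x = adj h ** (h ** x)"
        using adj_inv(1)[OF Gamma0_det[OF h(1)]] by (simp add: matrix_mul_assoc)
      also have "\<dots> = (adj h ** C h') ** C (R j)" using hx by (simp add: matrix_mul_assoc)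
      finally have "x = (adj h ** C h') ** C (R j)" .
      moreover have "adj h ** C h' \<in> Gamma0 (m'*n)"
      proof (rule Gamma0_mult)
        show "adj h \<in> Gamma0 (m'*n)" using h(1) by (rule adj_Gamma0)
        have "h' \<in> Gamma0 (m*(m'*n))" using j(2) by (simp only: mult.assoc)
        then show "C h' \<in> Gamma0 (m'*n)" by (rule CG)
      qed
      ultimately show "x \<in> (\<Union>j\<in>J. (\<lambda>h. h ** C (R j)) ` Gamma0 (m' * n))" using j(1) by blast
    qed
  qed
  have disj: "(\<lambda>h. h ** C (R i)) ` Gamma0 (m'*n) \<inter> (\<lambda>h. h ** C (R j)) ` Gamma0 (m'*n) = {}"
    if ij: "i \<in> J" "j \<in> J" "i \<noteq> j" for i j
  proof (rule ccontr)
    assume "\<not> ?thesis"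
    then obtain h1 h2 where h: "h1 \<in> Gamma0 (m'*n)" "h2 \<in> Gamma0 (m'*n)" "h1 ** C (R i) = h2 ** C (R j)"
      by auto
    define g where "g = R j ** adj (R i)"
    have detRi: "det (R i) = 1" using Gamma0_det[OF RG[OF ij(1)]] .
    have gG: "g \<in> Gamma0 (m*n)" unfolding g_def using Gamma0_mult[OF RG[OF ij(2)] adj_Gamma0[OF RG[OF ij(1)]]] .
    have "C g = C (R j) ** C (adj (R i))" unfolding g_def Cmult ..
    also have "\<dots> = adj h2 ** h1"
    proof -
      have "adj h2 ** h1 = adj h2 ** h1 ** (C (R i) ** C (adj (R i)))"
        using adj_inv(2)[OF detRi] C1 by (simp add: Cmult[symmetric])
      also have "\<dots> = adj h2 ** (h1 ** C (R i)) ** C (adj (R i))" by (simp add: matrix_mul_assoc)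
      also have "\<dots> = (adj h2 ** h2) ** C (R j) ** C (adj (R i))" using h(3) by (simp add: matrix_mul_assoc)
      also have "\<dots> = C (R j) ** C (adj (R i))" using adj_inv(1)[OF Gamma0_det[OF h(2)]] by simp
      finally show ?thesis by simp
    qed
    also have "adj h2 ** h1 \<in> Gamma0 (m'*n)" using adj_Gamma0[OF h(2)] h(1) by (rule Gamma0_mult)
    finally have "C g \<in> Gamma0 (m'*n)" .
    then have "g \<in> Gamma0 (m*m'*n)" using conj_back[OF assms(2) gG] unfolding C_def B_def Bi_def by blast
    moreover have "g ** R i = R j" unfolding g_def
      using adj_inv(1)[OF detRi] by (simp add: matrix_mul_assoc[symmetric])
    ultimately have "R j \<in> (\<lambda>h. h ** R i) ` Gamma0 (m * m' * n)" by (metis image_eqI)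
    moreover have "R j \<in> (\<lambda>h. h ** R j) ` Gamma0 (m * m' * n)"
      using Gamma0_one by (metis image_eqI matrix_mul_lid)
    ultimately show False using D[OF ij] by blast
  qed
  have "right_coset_reps (Gamma0 (m' * n)) (Gamma0 n) (\<lambda>j. C (R j)) J"
    unfolding right_coset_reps_def using cover disj by (intro conjI ballI impI) auto
  moreover have "matrix_inv B = Bi" using Bm by simp
  ultimately show ?thesis unfolding C_def by (simp only: Bm)
qed

end
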